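(* For all $s > 0$, $$\theta_4''(s)\theta_4(s) - \theta_4'(s)^2 < -\frac{\theta_4'(s)\theta_4(s)}{s} < 0.$$
   Context: For $s>0$, $\theta_4(s) = \sum_{k\in\mathbb{Z}} (-1)^k e^{-\pi k^2 s}$. *)

theory Defs
  imports "HOL-Analysis.Analysis"
begin

text \<open>Jacobi theta function theta_4(s) = sum over integers k of (-1)^k exp(-pi k^2 s),
  meaningful for s > 0 (the series converges absolutely there).\<close>
definition theta4 :: "real \<Rightarrow> real" where
  "theta4 s = (\<Sum>\<^sub>\<infinity>k::int. (-1) powi k * exp (- pi * (of_int k)\<^sup>2 * s))"

end

theory Submission
  imports Defs
begin


definition qp :: "real \<Rightarrow> nat \<Rightarrow> real" where
  "qp p m = (\<Prod>i<m. 1 - p ^ Suc i)"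

fun gb :: "real \<Rightarrow> nat \<Rightarrow> nat \<Rightarrow> real" where
  "gb p 0 0 = 1"
| "gb p 0 (Suc k) = 0"
| "gb p (Suc m) 0 = 1"
| "gb p (Suc m) (Suc k) = gb p m k + p ^ Suc k * gb p m (Suc k)"

definition tri :: "nat \<Rightarrow> nat" where "tri k = k * (k - 1) div 2"

lemma tri_Suc: "tri (Suc k) = tri k + k"
proof -
  have "Suc k * k = k * (k - 1) + 2 * k" by (cases k) auto
  moreover have "even (k * (k - 1))" by (cases k) auto
  ultimately show ?thesis unfolding tri_def by auto
qed

lemma gb_gt: "k > m \<Longrightarrow> gb p m k = 0"
proof (induction m arbitrary: k)
  case 0 then show ?case by (cases k) auto
next
  case (Suc m) then show ?case by (cases k) auto
qed

lemma gb_0 [simp]: "gb p m 0 = 1" by (cases m) auto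

lemma qbinom:
  "(\<Prod>j<m. 1 + x * p ^ j) = (\<Sum>k\<le>m. gb p m k * p ^ tri k * x ^ k)"
proof (induction m arbitrary: x)
  case 0 then show ?case by (simp add: tri_def)
next
  case (Suc m)
  define R where "R = (\<Sum>k\<le>m. gb p m k * p ^ tri k * (x*p) ^ k)"
  have "(\<Prod>j<Suc m. 1 + x * p ^ j) = (1 + x) * (\<Prod>j<m. 1 + (x * p) * p ^ j)"
    by (subst prod.lessThan_Suc_shift) (simp add: mult.assoc)
  also have "\<dots> = (1 + x) * R" using Suc.IH[of "x*p"] by (simp add: R_def)
  finally have L: "(\<Prod>j<Suc m. 1 + x * p ^ j) = (1 + x) * R" .
  have "(\<Sum>k\<le>Suc m. gb p (Suc m) k * p ^ tri k * x ^ k)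
     = 1 + (\<Sum>k\<le>m. gb p (Suc m) (Suc k) * p ^ tri (Suc k) * x ^ Suc k)"
    by (subst sum.atMost_Suc_shift) (simp add: tri_def)
  also have "\<dots> = 1 + (\<Sum>k\<le>m. gb p m k * p ^ tri (Suc k) * x ^ Suc k)
       + (\<Sum>k\<le>m. p ^ Suc k * gb p m (Suc k) * p ^ tri (Suc k) * x ^ Suc k)"
    by (simp add: sum.distrib algebra_simps)
  also have "(\<Sum>k\<le>m. gb p m k * p ^ tri (Suc k) * x ^ Suc k) = x * R"
    unfolding R_def sum_distrib_left
    by (rule sum.cong) (simp_all add: tri_Suc power_add power_mult_distrib algebra_simps)
  also have "(\<Sum>k\<le>m. p ^ Suc k * gb p m (Suc k) * p ^ tri (Suc k) * x ^ Suc k)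
       = (\<Sum>k\<le>Suc m. gb p m k * p ^ tri k * (x*p) ^ k) - 1"
    by (subst sum.atMost_Suc_shift) (simp add: tri_def power_mult_distrib algebra_simps)
  also have "(\<Sum>k\<le>Suc m. gb p m k * p ^ tri k * (x*p) ^ k) = R"
    by (simp add: R_def gb_gt)
  finally show ?case using L by (simp add: algebra_simps)
qed


lemma qp_Suc: "qp p (Suc m) = qp p m * (1 - p ^ Suc m)"
  by (simp add: qp_def)

lemma qp_0 [simp]: "qp p 0 = 1" by (simp add: qp_def)

lemma pow_lt1: "0 \<le> (p::real) \<Longrightarrow> p < 1 \<Longrightarrow> p ^ Suc i < 1"
proof -
  assume a: "0 \<le> p" "p < 1"
  have "p ^ i \<le> 1" using a by (simp add: power_le_one)
  then have "p * p ^ i \<le> p" using a by (simp add: mult_left_le)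
  then show ?thesis using a by simp
qed

lemma qp_pos: "0 \<le> p \<Longrightarrow> p < 1 \<Longrightarrow> qp p m > 0"
  unfolding qp_def by (intro prod_pos) (auto dest: pow_lt1)

lemma gb_diag [simp]: "gb p m m = 1"
  by (induction m) (auto simp: gb_gt)

lemma gb_nonneg: "0 \<le> p \<Longrightarrow> 0 \<le> gb p m k"
proof (induction m arbitrary: k)
  case 0 then show ?case by (cases k) auto
next
  case (Suc m) then show ?case by (cases k) auto
qed

lemma gb_closed: "k \<le> m \<Longrightarrow> gb p m k * qp p k * qp p (m - k) = qp p m"
proof (induction m arbitrary: k)
  case 0 then show ?case by auto
next
  case (Suc m)
  show ?case
  proof (cases k)
    case 0 then show ?thesis by simp
  next
    case (Suc k')
    with Suc.prems have k': "k' \<le> m" by auto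
    have IH1: "gb p m k' * qp p k' * qp p (m - k') = qp p m" using Suc.IH k' by auto
    show ?thesis
    proof (cases "k' = m")
      case True
      then show ?thesis using \<open>k = Suc k'\<close> by (simp add: gb_gt qp_Suc)
    next
      case False
      then have k'': "Suc k' \<le> m" using k' by auto
      have IH2: "gb p m (Suc k') * qp p (Suc k') * qp p (m - Suc k') = qp p m"
        using Suc.IH k'' by auto
      have e1: "m - k' = Suc (m - Suc k')" using k'' by auto
      have e2: "Suc (m - Suc k') + Suc k' = Suc m" using k'' by auto
      have "gb p (Suc m) k * qp p k * qp p (Suc m - k)
          = (gb p m k' + p ^ Suc k' * gb p m (Suc k')) * qp p (Suc k') * qp p (m - k')"
        using \<open>k = Suc k'\<close> by simp
      also have "\<dots> = gb p m k' * qp p k' * qp p (m - k') * (1 - p ^ Suc k')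
          + p ^ Suc k' * (gb p m (Suc k') * qp p (Suc k') * qp p (m - Suc k')) * (1 - p ^ Suc (m - Suc k'))"
        unfolding e1 qp_Suc by (simp add: algebra_simps)
      also have "\<dots> = qp p m * (1 - p ^ Suc k' + p ^ Suc k' - p ^ (Suc (m - Suc k') + Suc k'))"
        unfolding IH1 IH2 power_add by (simp add: algebra_simps)
      also have "\<dots> = qp p (Suc m)" unfolding e2 qp_Suc by simp
      finally show ?thesis .
    qed
  qed
qed

lemma gb_eq: "0 \<le> p \<Longrightarrow> p < 1 \<Longrightarrow> k \<le> m \<Longrightarrow> gb p m k = qp p m / (qp p k * qp p (m - k))"
proof -
  assume a: "0 \<le> p" "p < 1" "k \<le> m"
  have "qp p k * qp p (m - k) \<noteq> 0" using qp_pos[OF a(1,2)] by (metis mult_pos_pos less_irrefl)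
  then show ?thesis using gb_closed[OF a(3), of p] by (simp add: eq_divide_eq mult.assoc)
qed

lemma gb_sym: "0 \<le> p \<Longrightarrow> p < 1 \<Longrightarrow> k \<le> m \<Longrightarrow> gb p m (m - k) = gb p m k"
  by (simp add: gb_eq)

lemma qbinom_hom:
  assumes "y > 0"
  shows "(\<Prod>j<m. y + x * p ^ j) = (\<Sum>k\<le>m. gb p m k * p ^ tri k * x ^ k * y ^ (m - k))"
proof -
  have "(\<Prod>j<m. y + x * p ^ j) = (\<Prod>j<m. y * (1 + (x / y) * p ^ j))"
    using assms by (intro prod.cong) (auto simp: field_simps)
  also have "\<dots> = y ^ m * (\<Prod>j<m. 1 + (x / y) * p ^ j)"
    by (simp add: prod.distrib)
  also have "\<dots> = (\<Sum>k\<le>m. y ^ m * (gb p m k * p ^ tri k * (x/y) ^ k))"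
    using qbinom[where m=m and x="x/y" and p=p] by (simp only: sum_distrib_left)
  also have "\<dots> = (\<Sum>k\<le>m. gb p m k * p ^ tri k * x ^ k * y ^ (m - k))"
  proof (rule sum.cong)
    fix k assume "k \<in> {..m}"
    then have "y ^ m = y ^ k * y ^ (m - k)" by (simp flip: power_add)
    then show "y ^ m * (gb p m k * p ^ tri k * (x/y) ^ k) = gb p m k * p ^ tri k * x ^ k * y ^ (m - k)"
      using assms by (simp add: power_divide field_simps)
  qed simp
  finally show ?thesis .
qed

lemma prod_split_double: fixes n :: nat shows "prod g {..<n+n} = prod g {..<n} * prod (\<lambda>i. g (n + i)) {..<n}"
proof -
  have "prod g {..<n+n} = prod g {0..<n} * prod g {n..<n+n}"
    by (simp add: prod.atLeastLessThan_concat lessThan_atLeast0)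
  also have "prod g {n..<n+n} = prod (\<lambda>i. g (i + n)) {0..<n}"
    using prod.shift_bounds_nat_ivl[of g 0 n n] by simp
  finally show ?thesis by (simp add: lessThan_atLeast0 add.commute)
qed

lemma sum_split_double: fixes n :: nat shows "sum g {..n+n} = g n + sum (\<lambda>j. g (n + Suc j) + g (n - Suc j)) {..<n}"
proof -
  have "{..n+n} = {..<n} \<union> {n..n+n}" by auto
  then have "sum g {..n+n} = sum g {..<n} + sum g {n..n+n}"
    by (simp add: sum.union_disjoint ivl_disj_int)
  also have "sum g {n..n+n} = sum (\<lambda>i. g (i + n)) {0..n}"
    using sum.shift_bounds_cl_nat_ivl[of g 0 n n] by simp
  also have "\<dots> = g n + sum (\<lambda>i. g (n + Suc i)) {..<n}"
    by (simp add: atLeast0AtMost sum.atMost_shift add.commute)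
  also have "sum g {..<n} = sum (\<lambda>i. g (n - Suc i)) {..<n}"
    by (simp add: sum.nat_diff_reindex)
  finally show ?thesis by (simp add: sum.distrib add_ac)
qed

lemma prod_odd_pow: "(\<Prod>j<n. (q::real) ^ (2*j+1)) = q ^ (n*n)"
proof (induction n)
  case (Suc n)
  have e: "n * n + (2 * n + 1) = Suc n * Suc n" by simp
  have "(\<Prod>j<Suc n. q^(2*j+1)) = q^(n*n) * q^(2*n+1)" using Suc by (simp only: prod.lessThan_Suc)
  also have "\<dots> = q^(Suc n * Suc n)" by (simp only: power_add[symmetric] e)
  finally show ?case .
qed simp


lemma tri_sq: "2 * tri k + k = k * k"
proof -
  have "even (k * (k - 1))" by (cases k) auto
  then have "2 * tri k = k * (k - 1)" unfolding tri_def by auto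
  then show ?thesis by (cases k) (auto simp: algebra_simps)
qed

lemma expo_plus: "a \<le> n \<Longrightarrow> (n + a) * (n + a) + (n + n) * (n + n - (n + a)) = 3 * (n * n) + (a::nat) * a"
proof -
  assume "a \<le> n"
  then obtain b where "n = a + b" using le_Suc_ex by blast
  then show ?thesis by (simp add: algebra_simps)
qed

lemma expo_minus: "a \<le> n \<Longrightarrow> (n - a) * (n - a) + (n + n) * (n + n - (n - a)) = 3 * (n * n) + (a::nat) * a"
proof -
  assume "a \<le> n"
  then obtain b where n: "n = a + b" using le_Suc_ex by blast
  have "n - a = b" "n + n - (n - a) = a + a + b" using n by auto
  then show ?thesis using n by (simp add: algebra_simps)
qed

lemma gauss_finite:
  fixes q :: real
  assumes q: "0 < q" "q < 1"
  shows "(\<Prod>i<n. 1 - q ^ (2*i+1))^2 = gb (q^2) (n+n) n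
     + 2 * (\<Sum>j<n. (-1)^(Suc j) * gb (q^2) (n+n) (n + Suc j) * q^(Suc j * Suc j))"
proof -
  define Od where "Od = (\<Prod>i<n. 1 - q ^ (2*i+1))"
  define G where "G k = gb (q^2) (n+n) k" for k
  define F where "F k = G k * (q^2) ^ tri k * (-q) ^ k * (q^(n+n)) ^ (n + n - k)" for k
  have H: "(\<Prod>j<n+n. q^(n+n) + (-q) * (q^2) ^ j) = (\<Sum>k\<le>n+n. F k)"
    unfolding F_def G_def by (rule qbinom_hom) (use q in auto)
  have F_eq: "F k = (-1)^k * G k * q ^ (k * k + (n+n) * (n+n-k))" for k
  proof -
    have a: "(q^2)^tri k = q^(2*tri k)" by (simp add: power_mult)
    have b: "(q^(n+n))^(n+n-k) = q^((n+n)*(n+n-k))" by (simp add: power_mult)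
    have c: "(-q)^k = (-1)^k * q^k" by (rule power_minus)
    have d: "q^(k*k + (n+n)*(n+n-k)) = q^(2*tri k) * q^k * q^((n+n)*(n+n-k))"
      by (simp only: power_add[symmetric] tri_sq)
    show ?thesis by (simp only: F_def a b c d mult_ac)
  qed
  have P1: "(\<Prod>j<n. q^(n+n) + (-q) * (q^2) ^ j) = (-1)^n * q^(n*n) * Od"
  proof -
    have "(\<Prod>j<n. q^(n+n) + (-q) * (q^2) ^ j) = (\<Prod>j<n. (- (q^(2*j+1))) * (1 - q^(2*(n - Suc j)+1)))"
    proof (rule prod.cong)
      fix j assume "j \<in> {..<n}"
      then have e: "n + n = (2*j+1) + (2*(n - Suc j)+1)" by auto
      have e2: "(q^2)^j = q^(2*j)" by (simp add: power_mult)
      show "q^(n+n) + (-q) * (q^2) ^ j = (- (q^(2*j+1))) * (1 - q^(2*(n - Suc j)+1))"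
        unfolding e power_add e2 by (simp add: algebra_simps)
    qed simp
    also have "\<dots> = (\<Prod>j<n. - (q^(2*j+1))) * (\<Prod>j<n. 1 - q^(2*(n - Suc j)+1))"
      by (rule prod.distrib)
    also have "(\<Prod>j<n. 1 - q^(2*(n - Suc j)+1)) = Od"
      unfolding Od_def by (rule prod.nat_diff_reindex)
    also have "(\<Prod>j<n. - (q^(2*j+1))) = (-1)^n * q^(n*n)"
      using prod_odd_pow[where n=n and q=q] by (simp add: prod_uminus)
    finally show ?thesis .
  qed
  have P2: "(\<Prod>i<n. q^(n+n) + (-q) * (q^2) ^ (n+i)) = q^((n+n)*n) * Od"
  proof -
    have "(\<Prod>i<n. q^(n+n) + (-q) * (q^2) ^ (n+i)) = (\<Prod>i<n. q^(n+n) * (1 - q^(2*i+1)))"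
    proof (rule prod.cong)
      fix i
      have ex: "2*(n+i)+1 = (n+n) + (2*i+1)" by simp
      have e1: "(q^2)^(n+i) * q = q^(2*(n+i)+1)" by (simp only: power_mult power_Suc2 Suc_eq_plus1[symmetric])
      have e: "(q^2)^(n+i) * q = q^(n+n) * q^(2*i+1)"
        unfolding e1 ex by (rule power_add)
      have e': "(-q) * (q^2)^(n+i) = - (q^(n+n) * q^(2*i+1))"
        using e by (metis minus_mult_left mult.commute)
      show "q^(n+n) + (-q) * (q^2) ^ (n+i) = q^(n+n) * (1 - q^(2*i+1))"
        unfolding e' by (simp add: algebra_simps)
    qed simp
    also have "\<dots> = (q^(n+n))^n * Od" unfolding Od_def by (simp add: prod.distrib)
    also have "(q^(n+n))^n = q^((n+n)*n)" by (rule power_mult[symmetric])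
    finally show ?thesis .
  qed
  have LHS: "(\<Prod>j<n+n. q^(n+n) + (-q) * (q^2) ^ j) = (-1)^n * q^(3*(n*n)) * Od^2"
  proof -
    have ex: "q^(n*n) * q^((n+n)*n) = q^(3*(n*n))"
    proof -
      have "n*n + (n+n)*n = 3*(n*n)" by simp
      then show ?thesis by (simp only: power_add[symmetric])
    qed
    have "(\<Prod>j<n+n. q^(n+n) + (-q) * (q^2) ^ j) = (-1)^n * q^(n*n) * Od * (q^((n+n)*n) * Od)"
      unfolding prod_split_double P1 P2 by (rule refl)
    also have "\<dots> = (-1)^n * (q^(n*n) * q^((n+n)*n)) * (Od * Od)" by (simp only: mult_ac)
    finally show ?thesis by (simp only: ex power2_eq_square)
  qed
  define C where "C = (-1::real)^n * q^(3*(n*n))"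
  define X where "X j = (-1)^(Suc j) * G (n + Suc j) * q^(Suc j * Suc j)" for j
  have Fn: "F n = C * G n"
  proof -
    have "n*n + (n+n)*(n+n-n) = 3*(n*n)" by simp
    then show ?thesis unfolding F_eq C_def by (simp only: mult_ac)
  qed
  have Fp: "F (n + Suc j) = C * X j" if "j < n" for j
  proof -
    have "Suc j \<le> n" using that by simp
    show ?thesis unfolding F_eq C_def X_def expo_plus[OF \<open>Suc j \<le> n\<close>] power_add
      by (simp only: mult_ac)
  qed
  have Fm: "F (n - Suc j) = C * X j" if "j < n" for j
  proof -
    have le: "Suc j \<le> n" using that by simp
    have s: "G (n - Suc j) = G (n + Suc j)"
    proof -
      have "n + n - (n - Suc j) = n + Suc j" using le by simp
      moreover have "q^2 < 1" using q by (simp add: power_less_one_iff)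
      ultimately show ?thesis
        unfolding G_def using gb_sym[of "q^2" "n - Suc j" "n+n"] q le by simp
    qed
    have sg: "(-1::real)^(n - Suc j) = (-1)^n * (-1)^(Suc j)"
    proof -
      have "(-1::real)^n = (-1)^(n - Suc j + Suc j)" using le by simp
      also have "\<dots> = (-1)^(n - Suc j) * (-1)^(Suc j)" by (rule power_add)
      finally have "(-1::real)^n * (-1)^(Suc j) = (-1)^(n - Suc j) * ((-1)^(Suc j) * (-1)^(Suc j))"
        by simp
      also have "(-1::real)^(Suc j) * (-1)^(Suc j) = 1" by (simp flip: power_add)
      finally show ?thesis by simp
    qed
    show ?thesis unfolding F_eq C_def X_def expo_minus[OF le] power_add s sg
      by (simp only: mult_ac)
  qed
  have "(\<Sum>k\<le>n+n. F k) = C * G n + (\<Sum>j<n. 2 * (C * X j))"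
  proof -
    have "F (n + Suc j) + F (n - Suc j) = 2 * (C * X j)" if "j \<in> {..<n}" for j
      using Fp[of j] Fm[of j] that by simp
    then show ?thesis unfolding sum_split_double Fn by simp
  qed
  also have "\<dots> = C * (G n + 2 * (\<Sum>j<n. X j))"
    by (simp add: sum_distrib_left algebra_simps)
  finally have "C * Od^2 = C * (G n + 2 * (\<Sum>j<n. X j))"
    using H LHS C_def by metis
  moreover have "C \<noteq> 0" using q unfolding C_def by simp
  ultimately show ?thesis unfolding Od_def G_def X_def by simp
qed



lemma ln_one_minus_bound:
  fixes y c :: real
  assumes "0 \<le> y" "y \<le> c" "c < 1"
  shows "\<bar>ln (1 - y)\<bar> \<le> y / (1 - c)"
proof -
  have pos: "0 < 1 - y" using assms by simp
  have le0: "ln (1 - y) \<le> 0" using assms pos by simp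
  have "ln (1 / (1 - y)) \<le> 1 / (1 - y) - 1" using pos by (intro ln_le_minus_one) simp
  then have "- ln (1 - y) \<le> y / (1 - y)" using pos by (simp add: ln_div field_simps)
  also have "y / (1 - y) \<le> y / (1 - c)" using assms by (intro divide_left_mono) auto
  finally show ?thesis using le0 by simp
qed

lemma prod_lim:
  fixes b :: "nat \<Rightarrow> real"
  assumes b0: "\<And>i. 0 \<le> b i" and bc: "\<And>i. b i \<le> c" and c1: "c < 1" and sb: "summable b"
  shows "summable (\<lambda>i. ln (1 - b i))"
    and "(\<lambda>n. \<Prod>i<n. 1 - b i) \<longlonglongrightarrow> exp (\<Sum>i. ln (1 - b i))"
proof -
  show sl: "summable (\<lambda>i. ln (1 - b i))"
  proof (rule summable_comparison_test')
    show "summable (\<lambda>i. b i / (1 - c))" using sb by (rule summable_divide)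
    show "norm (ln (1 - b i)) \<le> b i / (1 - c)" for i
      using ln_one_minus_bound[OF b0 bc c1] by simp
  qed
  have "(\<Prod>i<n. 1 - b i) = exp (\<Sum>i<n. ln (1 - b i))" for n
  proof -
    have "(\<Prod>i<n. 1 - b i) = (\<Prod>i<n. exp (ln (1 - b i)))"
    proof (rule prod.cong)
      fix i
      have "b i < 1" using bc[of i] c1 by linarith
      then show "1 - b i = exp (ln (1 - b i))" by simp
    qed simp
    then show ?thesis by (simp add: exp_sum)
  qed
  then show "(\<lambda>n. \<Prod>i<n. 1 - b i) \<longlonglongrightarrow> exp (\<Sum>i. ln (1 - b i))"
    using tendsto_exp[OF summable_LIMSEQ[OF sl]] by simp
qed

definition Pinf :: "real \<Rightarrow> real" where
  "Pinf p = exp (\<Sum>i. ln (1 - p ^ Suc i))"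

lemma Pinf_pos: "Pinf p > 0" by (simp add: Pinf_def)

lemma qp_lim:
  assumes "0 \<le> p" "p < 1"
  shows "qp p \<longlonglongrightarrow> Pinf p"
proof -
  have "(\<lambda>n. \<Prod>i<n. 1 - p ^ Suc i) \<longlonglongrightarrow> exp (\<Sum>i. ln (1 - p ^ Suc i))"
  proof (rule prod_lim(2))
    show "0 \<le> p ^ Suc i" for i using assms by simp
    show "p ^ Suc i \<le> p" for i using assms by (simp add: power_le_one mult_left_le)
    show "summable (\<lambda>i. p ^ Suc i)" using assms by (simp add: summable_geometric)
  qed (use assms in auto)
  then show ?thesis by (simp add: qp_def[abs_def] Pinf_def)
qed

lemma qp_dec: "0 \<le> p \<Longrightarrow> p < 1 \<Longrightarrow> decseq (qp p)"
proof (rule decseq_SucI)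
  fix m assume a: "0 \<le> p" "p < 1"
  have "qp p m * (1 - p ^ Suc m) \<le> qp p m * 1"
    using a qp_pos[OF a, of m] by (intro mult_left_mono) auto
  then show "qp p (Suc m) \<le> qp p m" by (simp add: qp_Suc)
qed

lemma Pinf_le: "0 \<le> p \<Longrightarrow> p < 1 \<Longrightarrow> Pinf p \<le> qp p m"
  using decseq_ge[OF qp_dec qp_lim] by blast

lemma gb_le: 
  assumes "0 \<le> p" "p < 1"
  shows "gb p m k \<le> 1 / Pinf p"
proof (cases "k \<le> m")
  case True
  have pos: "qp p k > 0" "qp p (m - k) > 0" "qp p m > 0" using qp_pos assms by auto
  have "qp p m \<le> qp p k" using qp_dec[OF assms] True by (simp add: decseq_def)
  then have "gb p m k \<le> qp p k / (qp p k * qp p (m - k))"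
    unfolding gb_eq[OF assms True] using pos by (intro divide_right_mono) auto
  also have "\<dots> = 1 / qp p (m - k)" using pos by simp
  also have "\<dots> \<le> 1 / Pinf p" using Pinf_le[OF assms, of "m-k"] Pinf_pos[of p] pos
    by (intro divide_left_mono) auto
  finally show ?thesis .
next
  case False
  then show ?thesis using gb_gt[of m k p] Pinf_pos[of p] by simp
qed

lemma gb_lim:
  assumes "0 \<le> p" "p < 1"
  shows "(\<lambda>n. gb p (n+n) (n+k)) \<longlonglongrightarrow> 1 / Pinf p"
proof -
  have L: "qp p \<longlonglongrightarrow> Pinf p" by (rule qp_lim[OF assms])
  have L1: "(\<lambda>n. qp p (n+n)) \<longlonglongrightarrow> Pinf p"
    using LIMSEQ_subseq_LIMSEQ[OF L, of "\<lambda>n. n+n"] by (simp add: strict_mono_def o_def)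
  have L2: "(\<lambda>n. qp p (n+k)) \<longlonglongrightarrow> Pinf p"
    using LIMSEQ_ignore_initial_segment[OF L, of k] by simp
  have L3: "(\<lambda>n. qp p (n-k)) \<longlonglongrightarrow> Pinf p"
    by (rule LIMSEQ_offset[where k=k]) (simp add: L)
  have "(\<lambda>n. qp p (n+n) / (qp p (n+k) * qp p (n-k))) \<longlonglongrightarrow> Pinf p / (Pinf p * Pinf p)"
    using Pinf_pos[of p] by (intro tendsto_intros L1 L2 L3) auto
  moreover have "Pinf p / (Pinf p * Pinf p) = 1 / Pinf p" using Pinf_pos[of p] by simp
  moreover have "eventually (\<lambda>n. qp p (n+n) / (qp p (n+k) * qp p (n-k)) = gb p (n+n) (n+k)) sequentially"
  proof (rule eventually_sequentiallyI[of k])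
    fix n assume "k \<le> n"
    then have "n + k \<le> n + n" "n + n - (n + k) = n - k" by auto
    then show "qp p (n+n) / (qp p (n+k) * qp p (n-k)) = gb p (n+n) (n+k)"
      using gb_eq[OF assms] by metis
  qed
  ultimately show ?thesis using Lim_transform_eventually by fastforce
qed



lemma gauss_prod:
  fixes q :: real
  assumes q: "0 < q" "q < 1"
  shows "summable (\<lambda>k. (-1)^Suc k * q^(Suc k * Suc k))"
    and "1 + 2 * (\<Sum>k. (-1)^Suc k * q^(Suc k * Suc k))
         = Pinf (q^2) * exp (\<Sum>i. ln (1 - q^(2*i+1)))^2"
proof -
  define p where "p = q^2"
  have p: "0 \<le> p" "p < 1" using q by (auto simp: p_def power_less_one_iff)
  define P where "P = Pinf p"
  have P: "P > 0" by (simp add: P_def Pinf_pos)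
  define s where "s k = (-1)^Suc k * q^(Suc k * Suc k)" for k
  define a where "a k n = gb p (n+n) (n + Suc k) * s k" for k n
  define M where "M k = (1/P) * q^Suc k" for k
  have sM: "summable M" unfolding M_def
    using q by (intro summable_mult) (simp add: summable_geometric)
  have qle: "q^(Suc k * Suc k) \<le> q^Suc k" for k
    using q by (intro power_decreasing) auto
  have abs_s: "\<bar>s k\<bar> = q^(Suc k * Suc k)" for k
    using q by (simp add: s_def abs_mult)
  show ss: "summable s"
  proof (rule summable_comparison_test')
    show "summable (\<lambda>k. q^Suc k)" using q by (simp add: summable_geometric)
    show "norm (s k) \<le> q^Suc k" for k using abs_s[of k] qle[of k] by simp
  qed
  have bound: "norm (a k n) \<le> M k" for k n
  proof -
    have "norm (a k n) = gb p (n+n) (n + Suc k) * \<bar>s k\<bar>"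
      unfolding a_def using gb_nonneg[OF p(1)] by (simp add: abs_mult)
    also have "\<dots> \<le> (1/P) * q^Suc k"
      unfolding abs_s P_def
      using gb_le[OF p] gb_nonneg[OF p(1)] qle[of k] q Pinf_pos[of p]
      by (intro mult_mono) auto
    finally show ?thesis by (simp add: M_def)
  qed
  have lim_a: "(\<lambda>n. a k n) \<longlonglongrightarrow> (1/P) * s k" for k
    unfolding a_def P_def by (intro tendsto_mult_right gb_lim p)
  have T: "(\<lambda>n. suminf (\<lambda>k. a k n)) \<longlonglongrightarrow> suminf (\<lambda>k. (1/P) * s k)"
    using tannerys_theorem[where a=a and b="\<lambda>k. (1/P) * s k" and M=M and F=sequentially,
        OF lim_a _ sM] bound by (auto intro: always_eventually)
  have fin: "suminf (\<lambda>k. a k n) = (\<Sum>k<n. a k n)" for n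
    by (rule suminf_finite) (auto simp: a_def gb_gt)
  have mid: "(\<lambda>n. gb p (n+n) n) \<longlonglongrightarrow> 1/P"
    using gb_lim[OF p, of 0] by (simp add: P_def)
  have R: "(\<lambda>n. gb p (n+n) n + 2 * (\<Sum>k<n. a k n)) \<longlonglongrightarrow> 1/P + 2 * suminf (\<lambda>k. (1/P) * s k)"
    using T unfolding fin by (intro tendsto_intros mid)
  define Oinf where "Oinf = exp (\<Sum>i. ln (1 - q^(2*i+1)))"
  have LO: "(\<lambda>n. \<Prod>i<n. 1 - q^(2*i+1)) \<longlonglongrightarrow> Oinf"
    unfolding Oinf_def
  proof (rule prod_lim(2))
    show "0 \<le> q^(2*i+1)" for i using q by simp
    show "q^(2*i+1) \<le> q" for i using q by (simp add: power_le_one mult_left_le)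
    show "summable (\<lambda>i. q^(2*i+1))"
      using q by (simp add: power_mult summable_geometric power_less_one_iff)
  qed (use q in auto)
  have L: "(\<lambda>n. (\<Prod>i<n. 1 - q^(2*i+1))^2) \<longlonglongrightarrow> Oinf^2"
    by (intro tendsto_intros LO)
  have eq: "(\<Prod>i<n. 1 - q^(2*i+1))^2 = gb p (n+n) n + 2 * (\<Sum>k<n. a k n)" for n
    unfolding gauss_finite[OF q, of n] p_def a_def s_def by (simp add: mult_ac)
  have "Oinf^2 = 1/P + 2 * suminf (\<lambda>k. (1/P) * s k)"
    using LIMSEQ_unique[OF L] R unfolding eq by simp
  also have "suminf (\<lambda>k. (1/P) * s k) = (1/P) * suminf s"
    using ss by (rule suminf_mult)
  finally have "Oinf^2 = (1 + 2 * suminf s) / P" by (simp add: add_divide_distrib)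
  then have "1 + 2 * suminf s = P * Oinf^2" using P by (simp add: field_simps)
  then show "1 + 2 * (\<Sum>k. (-1)^Suc k * q^(Suc k * Suc k))
         = Pinf (q^2) * exp (\<Sum>i. ln (1 - q^(2*i+1)))^2"
    unfolding s_def[abs_def] P_def p_def Oinf_def by simp
qed



lemma theta4_series:
  fixes s :: real
  assumes "s > 0"
  shows "theta4 s = 1 + 2 * (\<Sum>k. (-1)^Suc k * (exp (- pi * s)) ^ (Suc k * Suc k))"
proof -
  define q where "q = exp (- pi * s)"
  have q: "0 < q" "q < 1" using assms by (auto simp: q_def)
  define t where "t k = (-1) powi k * exp (- pi * (of_int k)\<^sup>2 * s)" for k :: int
  define u where "u k = (-1::real)^Suc k * q^(Suc k * Suc k)" for k :: nat
  have tq: "exp (- pi * (of_nat m)\<^sup>2 * s) = q ^ (m * m)" for m :: nat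
  proof -
    have "exp (- pi * (of_nat m)\<^sup>2 * s) = exp (of_nat (m*m) * (- pi * s))"
      by (simp add: power2_eq_square algebra_simps)
    also have "\<dots> = q ^ (m * m)" unfolding q_def by (rule exp_of_nat_mult)
    finally show ?thesis .
  qed
  have tpos: "t (int (Suc n)) = u n" for n
  proof -
    have a: "(-1::real) powi (int (Suc n)) = (-1)^Suc n" by (rule power_int_of_nat)
    have b: "(of_int (int (Suc n))::real)\<^sup>2 = (of_nat (Suc n))\<^sup>2" by simp
    show ?thesis unfolding t_def u_def a b tq ..
  qed
  have tneg: "t (- int (Suc n)) = u n" for n
  proof -
    have a: "(-1::real) powi (- int (Suc n)) = (-1)^Suc n"
      by (simp only: power_int_minus power_int_of_nat power_inverse[symmetric] inverse_minus_eq inverse_1)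
    have b: "(of_int (- int (Suc n)) :: real)\<^sup>2 = (of_nat (Suc n))\<^sup>2" by (simp add: power2_eq_square algebra_simps)
    show ?thesis unfolding t_def u_def a b tq ..
  qed
  have nu: "summable (\<lambda>k. norm (u k))"
  proof (rule summable_comparison_test')
    show "summable (\<lambda>k. q^Suc k)" using q by (simp add: summable_geometric)
    show "norm (norm (u k)) \<le> q^Suc k" for k
      using q power_decreasing[of "Suc k" "Suc k * Suc k" q] by (simp add: u_def abs_mult)
  qed
  have hu: "(u has_sum suminf u) UNIV"
    by (rule norm_summable_imp_has_sum[OF nu summable_sums[OF summable_norm_cancel[OF nu]]])
  have hA: "(t has_sum suminf u) ((\<lambda>n. int (Suc n)) ` UNIV)"
  proof -
    have cA: "t \<circ> (\<lambda>n. int (Suc n)) = u" by (rule ext) (simp only: o_def tpos)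
    have "inj_on (\<lambda>n. int (Suc n)) UNIV" by (auto simp: inj_on_def)
    from has_sum_reindex[where h="\<lambda>n. int (Suc n)" and A=UNIV and g=t and x="suminf u", OF this]
    show ?thesis unfolding cA using hu by blast
  qed
  have hB: "(t has_sum suminf u) ((\<lambda>n. - int (Suc n)) ` UNIV)"
  proof -
    have cA: "t \<circ> (\<lambda>n. - int (Suc n)) = u" by (rule ext) (simp only: o_def tneg)
    have "inj_on (\<lambda>n. - int (Suc n)) UNIV" by (auto simp: inj_on_def)
    from has_sum_reindex[where h="\<lambda>n. - int (Suc n)" and A=UNIV and g=t and x="suminf u", OF this]
    show ?thesis unfolding cA using hu by blast
  qed
  have h0: "(t has_sum 1) {0}"
    using has_sum_finite[of "{0::int}" t] by (simp add: t_def)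
  have U: "UNIV = ({0} \<union> (\<lambda>n. int (Suc n)) ` UNIV) \<union> (\<lambda>n. - int (Suc n)) ` UNIV"
  proof -
    have "k \<in> ({0} \<union> (\<lambda>n. int (Suc n)) ` UNIV) \<union> (\<lambda>n. - int (Suc n)) ` UNIV" for k :: int
    proof (cases "k > 0")
      case True
      then have "k = int (Suc (nat k - 1))" by simp
      then show ?thesis by blast
    next
      case False
      show ?thesis
      proof (cases "k = 0")
        case False
        with \<open>\<not> k > 0\<close> have "k = - int (Suc (nat (-k) - 1))" by simp
        then show ?thesis by blast
      qed simp
    qed
    then show ?thesis by blast
  qed
  have "(t has_sum (1 + suminf u + suminf u)) UNIV"
    unfolding U by (intro has_sum_Un_disjoint h0 hA hB) auto
  then have "theta4 s = 1 + suminf u + suminf u"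
    unfolding theta4_def t_def[symmetric] by (rule infsumI)
  then show ?thesis unfolding u_def q_def by simp
qed



definition L :: "real \<Rightarrow> real \<Rightarrow> real" where "L a x = ln (1 - exp (- (a * x)))"
definition D1 :: "real \<Rightarrow> real \<Rightarrow> real" where "D1 a x = a / (exp (a * x) - 1)"
definition D2 :: "real \<Rightarrow> real \<Rightarrow> real" where
  "D2 a x = - (a\<^sup>2 * exp (a * x)) / (exp (a * x) - 1)\<^sup>2"

lemma one_plus_pow: "0 \<le> (t::real) \<Longrightarrow> 1 + t ^ Suc n \<le> (1 + t) ^ Suc n"
proof (induction n)
  case 0 then show ?case by simp
next
  case (Suc n)
  have eq: "(1 + t ^ Suc n) * (1 + t) = 1 + t ^ Suc (Suc n) + (t + t ^ Suc n)" by (simp add: algebra_simps)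
  have "0 \<le> t + t ^ Suc n" using Suc.prems by simp
  then have "1 + t ^ Suc (Suc n) \<le> (1 + t ^ Suc n) * (1 + t)" unfolding eq by linarith
  also have "\<dots> \<le> (1 + t) ^ Suc n * (1 + t)"
    using Suc by (intro mult_right_mono) auto
  finally show ?case by (simp add: mult.commute)
qed

lemma expm1_lower:
  fixes y :: real
  assumes "0 \<le> y" "n > 0"
  shows "(y / n) ^ n \<le> exp y - 1"
proof -
  obtain m where m: "n = Suc m" using assms gr0_implies_Suc by blast
  have "1 + (y / n) ^ n \<le> (1 + y / n) ^ n" unfolding m using assms by (intro one_plus_pow) simp
  also have "\<dots> \<le> exp (y / n) ^ n"
    using assms by (intro power_mono) (auto simp: add.commute)
  also have "exp (y / n) ^ n = exp (of_nat n * (y / n))" by (rule exp_of_nat_mult[symmetric])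
  also have "of_nat n * (y / n) = y" using assms by simp
  finally show ?thesis by simp
qed

lemma exp_one_minus: "0 < (y::real) \<Longrightarrow> exp y * (1 - y) < 1"
proof (cases "y < 1")
  case False
  assume "0 < y"
  then show ?thesis using False by (smt (verit) exp_gt_zero mult_nonneg_nonpos)
next
  case True
  assume y: "0 < y"
  have h: "0 \<le> 1 - y/2" using True by simp
  have "1 - y/2 \<le> exp (- (y/2))" using exp_ge_add_one_self[of "- (y/2)"] by simp
  then have "(1 - y/2)^2 \<le> exp (- (y/2)) ^ 2" using h by (intro power_mono) auto
  also have "exp (- (y/2)) ^ 2 = exp (- y)"
    by (simp add: exp_of_nat_mult[symmetric])
  finally have "1 - y + y^2/4 \<le> exp (- y)" by (simp add: power2_eq_square algebra_simps)
  moreover have "y^2/4 > 0" using y by simp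
  ultimately have "1 - y < exp (- y)" by linarith
  then have "exp y * (1 - y) < exp y * exp (- y)" by simp
  then show ?thesis by (simp add: exp_minus_inverse)
qed

lemma L_deriv:
  assumes "a > 0" "x > 0"
  shows "(L a has_field_derivative D1 a x) (at x within T)"
proof -
  have e1: "exp (a * x) > 1" using assms by (simp add: exp_gt_one)
  have e2: "exp (- (a * x)) < 1" using assms by simp
  have d: "((\<lambda>x. 1 - exp (- (a * x))) has_field_derivative (exp (- (a * x)) * a)) (at x)"
    by (auto intro!: derivative_eq_intros)
  have "((\<lambda>x. ln (1 - exp (- (a * x)))) has_field_derivative
          1 / (1 - exp (- (a * x))) * (exp (- (a * x)) * a)) (at x)"
    using e2 by (intro DERIV_chain2[OF DERIV_ln_divide d]) auto
  then have "((\<lambda>x. ln (1 - exp (- (a * x)))) has_field_derivative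
          1 / (1 - exp (- (a * x))) * (exp (- (a * x)) * a)) (at x within T)"
    by (rule has_field_derivative_at_within)
  moreover have "1 / (1 - exp (- (a * x))) * (exp (- (a * x)) * a) = D1 a x"
  proof -
    have em: "exp (- (a * x)) = 1 / exp (a * x)" by (simp add: exp_minus field_simps)
    have n1: "exp (a * x) - 1 \<noteq> 0" "exp (a * x) \<noteq> 0" using e1 by auto
    show ?thesis unfolding D1_def em using n1 by (simp add: field_simps)
  qed
  ultimately show ?thesis unfolding L_def[abs_def] by (rule DERIV_cong)
qed

lemma D1_deriv:
  assumes "a > 0" "x > 0"
  shows "(D1 a has_field_derivative D2 a x) (at x within T)"
proof -
  have e1: "exp (a * x) - 1 \<noteq> 0" using assms exp_gt_one[of "a*x"] by simp
  have "((\<lambda>x. a / (exp (a * x) - 1)) has_field_derivative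
          - (a * (exp (a * x) * a)) / ((exp (a * x) - 1) * (exp (a * x) - 1))) (at x within T)"
    using e1 by (intro derivative_eq_intros refl) (auto simp: field_simps)
  moreover have "- (a * (exp (a * x) * a)) / ((exp (a * x) - 1) * (exp (a * x) - 1)) = D2 a x"
    unfolding D2_def by (simp add: power2_eq_square algebra_simps)
  ultimately show ?thesis unfolding D1_def[abs_def] by (rule DERIV_cong)
qed

lemma key_ineq:
  assumes "a > 0" "x > 0"
  shows "x * D2 a x + D1 a x < 0"
proof -
  define E where "E = exp (a * x)"
  have E1: "E > 1" using assms by (simp add: E_def exp_gt_one)
  have ineq: "E * (1 - a * x) < 1" unfolding E_def using assms by (intro exp_one_minus) simp
  have nz: "E - 1 \<noteq> 0" using E1 by simp
  have h1: "D1 a x = a * (E - 1) / (E - 1)^2"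
    unfolding D1_def E_def[symmetric] using nz by (simp add: power2_eq_square)
  have h2: "x * D2 a x = - (a * (a * x) * E) / (E - 1)^2"
    unfolding D2_def E_def[symmetric] by (simp add: power2_eq_square mult_ac)
  have num: "- (a * (a * x) * E) + a * (E - 1) = a * (E - 1 - a * x * E)"
    by (simp add: algebra_simps)
  have "x * D2 a x + D1 a x = a * (E - 1 - a * x * E) / (E - 1)^2"
    unfolding h1 h2 add_divide_distrib[symmetric] num ..
  also have "\<dots> < 0"
    using ineq E1 assms by (intro divide_neg_pos mult_pos_neg) (auto simp: algebra_simps)
  finally show ?thesis .
qed

lemma D1_pos: "a > 0 \<Longrightarrow> x > 0 \<Longrightarrow> D1 a x > 0"
  unfolding D1_def by (simp add: exp_gt_one)

lemma D1_bound:
  assumes "a > 0" "x \<ge> x0" "x0 > 0"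
  shows "\<bar>D1 a x\<bar> \<le> 27 / (x0^3 * a^2)"
proof -
  have E: "((a*x)/3)^3 \<le> exp (a*x) - 1" using expm1_lower[of "a*x" 3] assms by simp
  have pos: "((a*x)/3)^3 > 0" using assms by simp
  have "\<bar>D1 a x\<bar> = a / (exp (a*x) - 1)" using D1_pos[of a x] assms unfolding D1_def by simp
  also have "\<dots> \<le> a / ((a*x)/3)^3" using E pos assms by (intro divide_left_mono) auto
  also have "\<dots> = 27 / (x^3 * a^2)" using assms by (simp add: field_simps power_mult_distrib eval_nat_numeral)
  also have "\<dots> \<le> 27 / (x0^3 * a^2)" using assms
    by (intro divide_left_mono mult_right_mono power_mono) auto
  finally show ?thesis .
qed

lemma D2_bound:
  assumes "a > 0" "x \<ge> x0" "x0 > 0"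
  shows "\<bar>D2 a x\<bar> \<le> 272 / (x0^4 * a^2)"
proof -
  define E where "E = exp (a*x) - 1"
  have E4: "((a*x)/4)^4 \<le> E" using expm1_lower[of "a*x" 4] assms by (simp add: E_def)
  have E2: "((a*x)/2)^2 \<le> E" using expm1_lower[of "a*x" 2] assms by (simp add: E_def)
  have p4: "((a*x)/4)^4 > 0" and p2: "((a*x)/2)^2 > 0" using assms by simp_all
  have Epos: "E > 0" using p4 E4 by linarith
  have ex: "exp (a*x) = E + 1" by (simp add: E_def)
  have "\<bar>D2 a x\<bar> = a^2 * (E + 1) / E^2"
    unfolding D2_def ex E_def[symmetric] using Epos by (simp add: abs_divide abs_mult)
  also have "\<dots> = a^2 / E + a^2 / E^2"
    using Epos by (simp add: field_simps power2_eq_square)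
  finally have "\<bar>D2 a x\<bar> = a^2 / E + a^2 / E^2" .
  also have "a^2 / E \<le> a^2 / ((a*x)/4)^4" using E4 p4 Epos assms by (intro divide_left_mono) auto
  also have "a^2 / E^2 \<le> a^2 / (((a*x)/2)^2)^2" using E2 p2 Epos assms
    by (intro divide_left_mono power_mono mult_pos_pos) auto
  also have "a^2 / ((a*x)/4)^4 + a^2 / (((a*x)/2)^2)^2 = 272 / (x^4 * a^2)"
    using assms by (simp add: field_simps power_mult_distrib eval_nat_numeral)
  also have "\<dots> \<le> 272 / (x0^4 * a^2)" using assms
    by (intro divide_left_mono mult_right_mono power_mono) auto
  finally show ?thesis by simp
qed

lemma L_bound:
  assumes "a > 0" "x > 0"
  shows "\<bar>L a x\<bar> \<le> 4 / (x^2 * a^2)"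
proof -
  define y where "y = exp (- (a * x))"
  have y: "0 \<le> y" "y < 1" using assms by (auto simp: y_def)
  have "\<bar>L a x\<bar> \<le> y / (1 - y)" unfolding L_def y_def[symmetric]
    using ln_one_minus_bound[of y y] y by simp
  also have "y / (1 - y) = 1 / (exp (a*x) - 1)"
    unfolding y_def using assms exp_gt_one[of "a*x"] by (simp add: exp_minus field_simps)
  also have "\<dots> \<le> 1 / ((a*x)/2)^2"
    using expm1_lower[of "a*x" 2] assms by (intro divide_left_mono) auto
  also have "\<dots> = 4 / (x^2 * a^2)" by (simp add: field_simps power_mult_distrib)
  finally show ?thesis .
qed



definition a1 :: "nat \<Rightarrow> real" where "a1 i = 2 * pi * (real i + 1)"
definition a2 :: "nat \<Rightarrow> real" where "a2 i = pi * (2 * real i + 1)"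
definition ff :: "nat \<Rightarrow> real \<Rightarrow> real" where "ff i x = L (a1 i) x + 2 * L (a2 i) x"
definition f1 :: "nat \<Rightarrow> real \<Rightarrow> real" where "f1 i x = D1 (a1 i) x + 2 * D1 (a2 i) x"
definition f2 :: "nat \<Rightarrow> real \<Rightarrow> real" where "f2 i x = D2 (a1 i) x + 2 * D2 (a2 i) x"
definition AA :: "real \<Rightarrow> real" where "AA x = (\<Sum>i. ff i x)"
definition A1 :: "real \<Rightarrow> real" where "A1 x = (\<Sum>i. f1 i x)"
definition A2 :: "real \<Rightarrow> real" where "A2 x = (\<Sum>i. f2 i x)"

lemma a1_ge: "a1 i \<ge> real (Suc i)"
proof -
  have "real (Suc i) \<le> 1 * (real i + 1)" by simp
  also have "\<dots> \<le> (2 * pi) * (real i + 1)" using pi_gt3 by (intro mult_right_mono) auto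
  finally show ?thesis by (simp add: a1_def)
qed

lemma a2_ge: "a2 i \<ge> real (Suc i)"
proof -
  have "real (Suc i) \<le> 2 * real i + 1" by simp
  also have "\<dots> \<le> pi * (2 * real i + 1)" using pi_gt3 by (intro mult_right_mono[of 1 pi, simplified]) auto
  finally show ?thesis by (simp add: a2_def)
qed

lemma a1_pos: "a1 i > 0" using a1_ge[of i] by (smt (verit) of_nat_0_less_iff zero_less_Suc)
lemma a2_pos: "a2 i > 0" using a2_ge[of i] by (smt (verit) of_nat_0_less_iff zero_less_Suc)

lemma inv_sq_le: "a \<ge> real (Suc i) \<Longrightarrow> K \<ge> 0 \<Longrightarrow> c > 0 \<Longrightarrow> K / (c * a^2) \<le> K / (c * real (Suc i)^2)"
  by (intro divide_left_mono mult_left_mono power_mono mult_pos_pos) auto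

lemma summ_bound:
  fixes g :: "nat \<Rightarrow> real"
  assumes "\<And>i. \<bar>g i\<bar> \<le> C / real (Suc i)^2"
  shows "summable g"
proof (rule summable_comparison_test')
  have "summable (\<lambda>n. inverse (real n ^ 2))" by (rule inverse_power_summable) simp
  then have "summable (\<lambda>n. inverse (real (Suc n) ^ 2))" by (subst summable_Suc_iff)
  then have "summable (\<lambda>n. C * inverse (real (Suc n) ^ 2))" by (rule summable_mult)
  then show "summable (\<lambda>n. C / real (Suc n) ^ 2)" by (simp add: divide_inverse)
  show "norm (g n) \<le> C / real (Suc n) ^ 2" for n using assms by simp
qed

lemma ff_bound: "x > 0 \<Longrightarrow> \<bar>ff i x\<bar> \<le> 12 / (x^2 * real (Suc i)^2)"
proof -
  assume x: "x > 0"
  have b1: "\<bar>L (a1 i) x\<bar> \<le> 4 / (x^2 * real (Suc i)^2)"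
    by (rule order_trans[OF L_bound[OF a1_pos x] inv_sq_le[OF a1_ge]]) (use x in auto)
  have b2: "\<bar>L (a2 i) x\<bar> \<le> 4 / (x^2 * real (Suc i)^2)"
    by (rule order_trans[OF L_bound[OF a2_pos x] inv_sq_le[OF a2_ge]]) (use x in auto)
  have "\<bar>ff i x\<bar> \<le> \<bar>L (a1 i) x\<bar> + 2 * \<bar>L (a2 i) x\<bar>" unfolding ff_def by simp
  also have "\<dots> \<le> 4 / (x^2 * real (Suc i)^2) + 2 * (4 / (x^2 * real (Suc i)^2))"
    using b1 b2 by linarith
  finally show ?thesis by simp
qed

lemma f1_bound: "x \<ge> x0 \<Longrightarrow> x0 > 0 \<Longrightarrow> \<bar>f1 i x\<bar> \<le> 81 / (x0^3 * real (Suc i)^2)"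
proof -
  assume x: "x \<ge> x0" "x0 > 0"
  have b1: "\<bar>D1 (a1 i) x\<bar> \<le> 27 / (x0^3 * real (Suc i)^2)"
    by (rule order_trans[OF D1_bound[OF a1_pos x] inv_sq_le[OF a1_ge]]) (use x in auto)
  have b2: "\<bar>D1 (a2 i) x\<bar> \<le> 27 / (x0^3 * real (Suc i)^2)"
    by (rule order_trans[OF D1_bound[OF a2_pos x] inv_sq_le[OF a2_ge]]) (use x in auto)
  have "\<bar>f1 i x\<bar> \<le> \<bar>D1 (a1 i) x\<bar> + 2 * \<bar>D1 (a2 i) x\<bar>" unfolding f1_def by simp
  also have "\<dots> \<le> 27 / (x0^3 * real (Suc i)^2) + 2 * (27 / (x0^3 * real (Suc i)^2))"
    using b1 b2 by linarith
  finally show ?thesis by simp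
qed

lemma f2_bound: "x \<ge> x0 \<Longrightarrow> x0 > 0 \<Longrightarrow> \<bar>f2 i x\<bar> \<le> 816 / (x0^4 * real (Suc i)^2)"
proof -
  assume x: "x \<ge> x0" "x0 > 0"
  have b1: "\<bar>D2 (a1 i) x\<bar> \<le> 272 / (x0^4 * real (Suc i)^2)"
    by (rule order_trans[OF D2_bound[OF a1_pos x] inv_sq_le[OF a1_ge]]) (use x in auto)
  have b2: "\<bar>D2 (a2 i) x\<bar> \<le> 272 / (x0^4 * real (Suc i)^2)"
    by (rule order_trans[OF D2_bound[OF a2_pos x] inv_sq_le[OF a2_ge]]) (use x in auto)
  have "\<bar>f2 i x\<bar> \<le> \<bar>D2 (a1 i) x\<bar> + 2 * \<bar>D2 (a2 i) x\<bar>" unfolding f2_def by simp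
  also have "\<dots> \<le> 272 / (x0^4 * real (Suc i)^2) + 2 * (272 / (x0^4 * real (Suc i)^2))"
    using b1 b2 by linarith
  finally show ?thesis by simp
qed

lemma ff_deriv: "x > 0 \<Longrightarrow> (ff i has_field_derivative f1 i x) (at x within T)"
  unfolding ff_def[abs_def] f1_def
  by (intro DERIV_add DERIV_cmult L_deriv a1_pos a2_pos)

lemma f1_deriv: "x > 0 \<Longrightarrow> (f1 i has_field_derivative f2 i x) (at x within T)"
  unfolding f1_def[abs_def] f2_def
  by (intro DERIV_add DERIV_cmult D1_deriv a1_pos a2_pos)

lemma AA_deriv:
  assumes "x > 0"
  shows "(AA has_field_derivative A1 x) (at x)"
proof -
  define S where "S = {x/2<..}"
  have xS: "x \<in> S" "x \<in> interior S" using assms by (auto simp: S_def interior_open)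
  have "((\<lambda>x. \<Sum>n. ff n x) has_field_derivative (\<Sum>n. f1 n x)) (at x)"
  proof (rule has_field_derivative_series'(2)[where S=S and x0=x])
    show "convex S" by (simp add: S_def)
    show "(ff n has_field_derivative f1 n y) (at y within S)" if "y \<in> S" for n y
      using that assms by (intro ff_deriv) (auto simp: S_def)
    show "uniformly_convergent_on S (\<lambda>n x. \<Sum>i<n. f1 i x)"
    proof (rule Weierstrass_m_test')
      show "norm (f1 n y) \<le> 81 / ((x/2)^3 * real (Suc n)^2)" if "y \<in> S" for n y
        using f1_bound[of "x/2" y n] that assms by (simp add: S_def)
      show "summable (\<lambda>n. 81 / ((x/2)^3 * real (Suc n)^2))"
        by (rule summ_bound[of _ "81 / (x/2)^3"]) (use assms in auto)
    qed
    show "summable (\<lambda>n. ff n x)"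
      by (rule summ_bound[of _ "12 / x^2"]) (use ff_bound[OF assms] in simp)
  qed (use xS in auto)
  then show ?thesis by (simp add: AA_def[abs_def] A1_def)
qed

lemma A1_deriv:
  assumes "x > 0"
  shows "(A1 has_field_derivative A2 x) (at x)"
proof -
  define S where "S = {x/2<..}"
  have xS: "x \<in> S" "x \<in> interior S" using assms by (auto simp: S_def interior_open)
  have "((\<lambda>x. \<Sum>n. f1 n x) has_field_derivative (\<Sum>n. f2 n x)) (at x)"
  proof (rule has_field_derivative_series'(2)[where S=S and x0=x])
    show "convex S" by (simp add: S_def)
    show "(f1 n has_field_derivative f2 n y) (at y within S)" if "y \<in> S" for n y
      using that assms by (intro f1_deriv) (auto simp: S_def)
    show "uniformly_convergent_on S (\<lambda>n x. \<Sum>i<n. f2 i x)"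
    proof (rule Weierstrass_m_test')
      show "norm (f2 n y) \<le> 816 / ((x/2)^4 * real (Suc n)^2)" if "y \<in> S" for n y
        using f2_bound[of "x/2" y n] that assms by (simp add: S_def)
      show "summable (\<lambda>n. 816 / ((x/2)^4 * real (Suc n)^2))"
        by (rule summ_bound[of _ "816 / (x/2)^4"]) (use assms in auto)
    qed
    show "summable (\<lambda>n. f1 n x)"
      by (rule summ_bound[of _ "81 / x^3"]) (use f1_bound[of x x] assms in simp)
  qed (use xS in auto)
  then show ?thesis by (simp add: A1_def[abs_def] A2_def)
qed



lemma L1_bound: "x > 0 \<Longrightarrow> \<bar>L (a1 i) x\<bar> \<le> 4 / (x^2 * real (Suc i)^2)"
  by (rule order_trans[OF L_bound[OF a1_pos] inv_sq_le[OF a1_ge]]) auto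
lemma L2_bound: "x > 0 \<Longrightarrow> \<bar>L (a2 i) x\<bar> \<le> 4 / (x^2 * real (Suc i)^2)"
  by (rule order_trans[OF L_bound[OF a2_pos] inv_sq_le[OF a2_ge]]) auto

lemma theta4_exp:
  assumes x: "x > 0"
  shows "theta4 x = exp (AA x)"
proof -
  define q where "q = exp (- pi * x)"
  have q: "0 < q" "q < 1" using x by (auto simp: q_def)
  have qpow: "q ^ m = exp (- (pi * real m * x))" for m
  proof -
    have "q ^ m = exp (real m * (- pi * x))" unfolding q_def by (rule exp_of_nat_mult[symmetric])
    then show ?thesis by (simp add: algebra_simps)
  qed
  have c1: "(q^2) ^ Suc i = exp (- (a1 i * x))" for i
  proof -
    have "(q^2) ^ Suc i = q ^ (2 * Suc i)" by (rule power_mult[symmetric])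
    also have "\<dots> = exp (- (a1 i * x))" unfolding qpow a1_def by (simp add: algebra_simps)
    finally show ?thesis .
  qed
  have c2: "q ^ (2*i+1) = exp (- (a2 i * x))" for i
    unfolding qpow a2_def by (simp add: algebra_simps)
  have s1: "summable (\<lambda>i. L (a1 i) x)"
    by (rule summ_bound[of _ "4 / x^2"]) (use L1_bound[OF x] in simp)
  have s2: "summable (\<lambda>i. L (a2 i) x)"
    by (rule summ_bound[of _ "4 / x^2"]) (use L2_bound[OF x] in simp)
  have "theta4 x = 1 + 2 * (\<Sum>k. (-1)^Suc k * q ^ (Suc k * Suc k))"
    using theta4_series[OF x] by (simp add: q_def)
  also have "\<dots> = Pinf (q^2) * exp (\<Sum>i. ln (1 - q^(2*i+1)))^2"
    by (rule gauss_prod(2)[OF q])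
  also have "Pinf (q^2) = exp (\<Sum>i. L (a1 i) x)"
    unfolding Pinf_def c1 L_def ..
  also have "(\<Sum>i. ln (1 - q^(2*i+1))) = (\<Sum>i. L (a2 i) x)"
    unfolding c2 L_def ..
  also have "exp (\<Sum>i. L (a1 i) x) * exp (\<Sum>i. L (a2 i) x)^2
      = exp ((\<Sum>i. L (a1 i) x) + 2 * (\<Sum>i. L (a2 i) x))"
    by (simp add: power2_eq_square exp_add[symmetric])
  also have "(\<Sum>i. L (a1 i) x) + 2 * (\<Sum>i. L (a2 i) x) = (\<Sum>i. L (a1 i) x + 2 * L (a2 i) x)"
    using suminf_add[OF s1 summable_mult[OF s2, of 2]] suminf_mult[OF s2, of 2] by simp
  also have "\<dots> = AA x" by (simp add: AA_def ff_def)
  finally show ?thesis .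
qed

theorem theorem4:
  fixes s :: real
  assumes "s > 0"
  shows "deriv (deriv theta4) s * theta4 s - (deriv theta4 s)\<^sup>2 < - (deriv theta4 s * theta4 s / s)
         \<and> - (deriv theta4 s * theta4 s / s) < 0"
proof -
  have Sopen: "open {0::real<..}" by simp
  have d1: "(theta4 has_field_derivative exp (AA x) * A1 x) (at x)" if "x > 0" for x
  proof -
    have "((\<lambda>x. exp (AA x)) has_field_derivative exp (AA x) * A1 x) (at x)"
      by (rule DERIV_chain2[OF DERIV_exp AA_deriv[OF that]])
    then show ?thesis
      by (rule has_field_derivative_transform_within_open[OF _ Sopen])
         (use that theta4_exp in auto)
  qed
  have dd: "deriv theta4 x = exp (AA x) * A1 x" if "x > 0" for x
    using d1[OF that] by (rule DERIV_imp_deriv)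
  have "((\<lambda>x. exp (AA x) * A1 x) has_field_derivative
          exp (AA s) * A1 s * A1 s + A2 s * exp (AA s)) (at s)"
    by (rule DERIV_mult[OF DERIV_chain2[OF DERIV_exp AA_deriv[OF assms]] A1_deriv[OF assms]])
  then have "(deriv theta4 has_field_derivative exp (AA s) * A1 s * A1 s + A2 s * exp (AA s)) (at s)"
    by (rule has_field_derivative_transform_within_open[OF _ Sopen]) (use assms dd in auto)
  then have dd2: "deriv (deriv theta4) s = exp (AA s) * A1 s * A1 s + A2 s * exp (AA s)"
    by (rule DERIV_imp_deriv)
  define e where "e = exp (AA s)"
  have e: "e > 0" by (simp add: e_def)
  have th: "theta4 s = e" using theta4_exp[OF assms] by (simp add: e_def)
  have sf1: "summable (\<lambda>i. f1 i s)"
    by (rule summ_bound[of _ "81 / s^3"]) (use f1_bound[of s s] assms in simp)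
  have sf2: "summable (\<lambda>i. f2 i s)"
    by (rule summ_bound[of _ "816 / s^4"]) (use f2_bound[of s s] assms in simp)
  have A1pos: "A1 s > 0"
  proof -
    have "0 < f1 n s" for n
      unfolding f1_def by (intro add_pos_pos mult_pos_pos D1_pos a1_pos a2_pos assms) simp
    then show ?thesis unfolding A1_def by (intro suminf_pos sf1)
  qed
  have key: "s * A2 s + A1 s < 0"
  proof -
    have tm: "s * f2 i s + f1 i s < 0" for i
    proof -
      have "s * f2 i s + f1 i s = (s * D2 (a1 i) s + D1 (a1 i) s) + 2 * (s * D2 (a2 i) s + D1 (a2 i) s)"
        by (simp add: f1_def f2_def algebra_simps)
      also have "\<dots> < 0" by (rule add_neg_neg[OF key_ineq[OF a1_pos assms, of i] mult_pos_neg[OF _ key_ineq[OF a2_pos assms, of i]]]) simp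
      finally show ?thesis .
    qed
    have sg: "summable (\<lambda>i. s * f2 i s + f1 i s)"
      by (intro summable_add summable_mult sf1 sf2)
    have eq: "s * A2 s + A1 s = (\<Sum>i. s * f2 i s + f1 i s)"
      unfolding A1_def A2_def
      using suminf_add[OF summable_mult[OF sf2, of s] sf1] suminf_mult[OF sf2, of s] by simp
    have "0 < (\<Sum>i. - (s * f2 i s + f1 i s))"
    proof (rule suminf_pos[OF summable_minus[OF sg]])
      show "0 < - (s * f2 i s + f1 i s)" for i using tm[of i] by linarith
    qed
    also have "(\<Sum>i. - (s * f2 i s + f1 i s)) = - (\<Sum>i. s * f2 i s + f1 i s)"
      by (rule suminf_minus[OF sg])
    finally show ?thesis unfolding eq by simp
  qed
  have lhs: "deriv (deriv theta4) s * theta4 s - (deriv theta4 s)\<^sup>2 = A2 s * e^2"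
    unfolding dd2 dd[OF assms] th e_def[symmetric] by (simp add: power2_eq_square algebra_simps)
  have rhs: "- (deriv theta4 s * theta4 s / s) = (- (A1 s * e^2)) / s"
    unfolding dd[OF assms] th e_def[symmetric] by (simp add: power2_eq_square algebra_simps)
  have e2: "e^2 > 0" using e by simp
  have i1: "A2 s * e^2 < (- (A1 s * e^2)) / s"
  proof -
    have "e^2 * (s * A2 s + A1 s) < 0" using e2 key by (rule mult_pos_neg)
    then have "A2 s * e^2 * s < - (A1 s * e^2)" by (simp add: algebra_simps)
    then show ?thesis using pos_less_divide_eq[OF assms, of "A2 s * e^2" "- (A1 s * e^2)"] by blast
  qed
  have i2: "(- (A1 s * e^2)) / s < 0"
    using A1pos e2 assms by (intro divide_neg_pos) auto
  show ?thesis unfolding lhs rhs using i1 i2 by simp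
qed



end
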